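(* Let $d\ge 2$ and $k_1,k_2\in\{2,\dots,d\}$. Let $C_1\subset\mathbb{S}^{d-1}$ be a $k_1$-tangent cap and $C_2\subset\mathbb{S}^{d-1}$ a $k_2$-tangent cap, and let $\mathcal O_1,\mathcal O_2$ be their orbits under the group generated by the reflections in the coordinate hyperplanes. Suppose $\mathcal O_1\ne\mathcal O_2$ and that the caps in $\mathcal O_1\cup\mathcal O_2$ form a packing (their interiors are pairwise disjoint). Then $$k_1+k_2-d\le\sqrt{(k_1-1)(k_2-1)}-1.$$
   Context: $\mathbb{S}^{d-1}$ is the unit sphere of $\mathbb{E}^d$ centred at the origin, with the standard orthonormal basis $\boldsymbol e_1,\dots,\boldsymbol e_d$. The coordinate greatspheres are $G_i=\{\boldsymbol x\in\mathbb{S}^{d-1}\mid x_i=0\}$. A spherical cap is a closed set $\{\boldsymbol x\in\mathbb{S}^{d-1}\mid \text{spherical distance from }\boldsymbol x\text{ to }\boldsymbol c\le r\}$ with centre $\boldsymbol c\in\mathbb{S}^{d-1}$ and spherical radius $r\in(0,\pi/2)$. A cap is tangent to $G_i$ if it meets $G_i$ only at boundary points of the cap (equivalently, its radius equals the angular distance from its centre to the hyperplane $x_i=0$). For $k\in\{2,\dots,d\}$, a $k$-tangent cap is a spherical cap whose centre lies on the intersection of $d-k$ of the coordinate greatspheres and which is tangent to each of the remaining $k$ coordinate greatspheres. *)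

theory Defs
  imports "HOL-Analysis.Analysis"
begin

text \<open>Points of the unit sphere S^{d-1} in E^d are vectors of type real^'n with d = CARD('n).\<close>

definition sph_dist :: "real^'n \<Rightarrow> real^'n \<Rightarrow> real" where
  "sph_dist x y = arccos (x \<bullet> y)"

definition coord_greatsphere :: "'n \<Rightarrow> (real^'n) set" where
  "coord_greatsphere i = {x \<in> sphere 0 1. x $ i = 0}"

definition sph_cap :: "real^'n \<Rightarrow> real \<Rightarrow> (real^'n) set" where
  "sph_cap c r = {x \<in> sphere 0 1. sph_dist x c \<le> r}"

definition dist_to_greatsphere :: "real^'n \<Rightarrow> 'n \<Rightarrow> real" where
  "dist_to_greatsphere c i = Inf ((\<lambda>x. sph_dist x c) ` coord_greatsphere i)"

definition tangent_cap_to :: "real^'n \<Rightarrow> real \<Rightarrow> 'n \<Rightarrow> bool" where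
  "tangent_cap_to c r i \<longleftrightarrow> r = dist_to_greatsphere c i"

definition k_tangent_cap :: "nat \<Rightarrow> (real^'n) set \<Rightarrow> bool" where
  "k_tangent_cap k C \<longleftrightarrow>
     (\<exists>c r S. c \<in> sphere 0 1 \<and> 0 < r \<and> r < pi / 2 \<and> C = sph_cap c r \<and>
        card S = CARD('n) - k \<and> (\<forall>i\<in>S. c $ i = 0) \<and>
        (\<forall>i. i \<notin> S \<longrightarrow> tangent_cap_to c r i))"

definition coord_refl :: "'n \<Rightarrow> real^'n \<Rightarrow> real^'n" where
  "coord_refl i x = (\<chi> j. if j = i then - (x $ j) else x $ j)"

text \<open>The group generated by the coordinate reflections (closure of id under composition
  with generators; each generator is an involution, so this is the generated group).\<close>
inductive_set refl_group :: "(real^'n \<Rightarrow> real^'n) set" where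
  refl_group_id: "id \<in> refl_group"
| refl_group_step: "g \<in> refl_group \<Longrightarrow> coord_refl i \<circ> g \<in> refl_group"

definition cap_orbit :: "(real^'n) set \<Rightarrow> (real^'n) set set" where
  "cap_orbit C = {g ` C | g. g \<in> refl_group}"

definition sph_interior :: "(real^'n) set \<Rightarrow> (real^'n) set" where
  "sph_interior A = {x \<in> A. \<exists>e>0. ball x e \<inter> sphere 0 1 \<subseteq> A}"

definition is_packing :: "(real^'n) set set \<Rightarrow> bool" where
  "is_packing F \<longleftrightarrow> (\<forall>A\<in>F. \<forall>B\<in>F. A \<noteq> B \<longrightarrow> sph_interior A \<inter> sph_interior B = {})"

end

theory Submission
  imports Defs
begin


definition flip :: "'n set \<Rightarrow> real^'n \<Rightarrow> real^'n" where
  "flip T x = (\<chi> j. if j \<in> T then - (x $ j) else x $ j)"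

lemma flip_empty: "flip {} = id"
  by (auto simp: flip_def fun_eq_iff vec_eq_iff)

lemma flip_insert: "flip (insert i T) = coord_refl i \<circ> flip T" if "i \<notin> T"
  using that by (auto simp: flip_def coord_refl_def fun_eq_iff vec_eq_iff)

lemma flip_in_group: "flip T \<in> refl_group"
proof -
  have "finite T" by simp
  then show ?thesis
  proof (induction T rule: finite_induct)
    case empty then show ?case by (metis flip_empty refl_group.refl_group_id)
  next
    case (insert i T) then show ?case by (metis flip_insert refl_group.refl_group_step)
  qed
qed

lemma flip_flip[simp]: "flip T (flip T x) = x"
  by (auto simp: flip_def vec_eq_iff)

lemma flip_inner[simp]: "flip T x \<bullet> flip T y = x \<bullet> y"
  by (auto simp: flip_def inner_vec_def intro!: sum.cong)

lemma flip_norm[simp]: "norm (flip T x) = norm x"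
  by (simp add: norm_eq_sqrt_inner)

lemma flip_cap: "flip T ` sph_cap c r = sph_cap (flip T c) r"
proof -
  have "y \<in> sph_cap (flip T c) r \<longleftrightarrow> flip T y \<in> sph_cap c r" for y
    using flip_inner[of T "flip T y" c]
    by (simp add: sph_cap_def sph_dist_def inner_commute)
  then show ?thesis
    by (auto simp: image_iff intro: exI[of _ "flip T _"]) (metis flip_flip)
qed

lemma group_comp_flip: "h \<in> refl_group \<Longrightarrow> h \<circ> flip T \<in> refl_group"
proof (induction h rule: refl_group.induct)
  case refl_group_id then show ?case by (simp add: flip_in_group)
next
  case (refl_group_step g i) then show ?case
    by (metis comp_assoc refl_group.refl_group_step)
qed

lemma orbit_eq: assumes "C2 = flip T ` C1" shows "cap_orbit C1 = cap_orbit C2"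
proof
  show "cap_orbit C2 \<subseteq> cap_orbit C1"
  proof
    fix X assume "X \<in> cap_orbit C2"
    then obtain g where g: "g \<in> refl_group" "X = g ` C2" by (auto simp: cap_orbit_def)
    then have "X = (g \<circ> flip T) ` C1" using assms by (simp add: image_comp)
    then show "X \<in> cap_orbit C1" using group_comp_flip[OF g(1)] unfolding cap_orbit_def by blast
  qed
next
  show "cap_orbit C1 \<subseteq> cap_orbit C2"
  proof
    fix X assume "X \<in> cap_orbit C1"
    then obtain g where g: "g \<in> refl_group" "X = g ` C1" by (auto simp: cap_orbit_def)
    have "(g \<circ> flip T) ` C2 = g ` C1" using assms by (simp add: image_comp o_def)
    then have "X = (g \<circ> flip T) ` C2" using g(2) by simp
    then show "X \<in> cap_orbit C2" using group_comp_flip[OF g(1)] unfolding cap_orbit_def by blast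
  qed
qed



lemma exists_other: assumes "CARD('n) \<ge> 2" shows "\<exists>j::'n. j \<noteq> i"
proof (rule ccontr)
  assume "\<not> ?thesis"
  then have "(UNIV::'n set) = {i}" by auto
  then have "card (UNIV::'n set) = card {i}" by (rule arg_cong)
  then have "card (UNIV::'n set) = 1" by simp
  then show False using assms by simp
qed

lemma dist_gs:
  fixes c :: "real^'n"
  assumes c: "norm c = 1" and d: "CARD('n) \<ge> 2"
  shows "dist_to_greatsphere c i = arccos (sqrt (1 - (c$i)^2))"
proof -
  define c' where "c' = (\<chi> j. if j = i then 0 else c$j)"
  have cc: "c \<bullet> c = 1" using c by (simp add: norm_eq_1)
  have "c' \<bullet> c' = (\<Sum>j\<in>UNIV. c$j * c$j - (if j = i then c$j * c$j else 0))"
    unfolding inner_vec_def c'_def by (intro sum.cong) auto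
  also have "\<dots> = c \<bullet> c - c$i * c$i"
    by (simp add: sum_subtractf inner_vec_def)
  finally have c'c': "c' \<bullet> c' = 1 - (c$i)^2" using cc by (simp add: power2_eq_square)
  have nc': "norm c' = sqrt (1 - (c$i)^2)" using c'c' by (simp add: norm_eq_sqrt_inner)
  have c'c: "c' \<bullet> c = c' \<bullet> c'"
    unfolding inner_vec_def c'_def by (intro sum.cong) auto
  have nc'1: "norm c' \<le> 1"
    using nc' by (simp add: real_sqrt_le_1_iff)  
  have xc: "x \<bullet> c = x \<bullet> c'" if "x $ i = 0" for x :: "real^'n"
    unfolding inner_vec_def c'_def using that by (intro sum.cong) auto
  have lower: "arccos (norm c') \<le> arccos (x \<bullet> c)" if "x \<in> coord_greatsphere i" for x
  proof -
    have x: "norm x = 1" "x $ i = 0" using that by (auto simp: coord_greatsphere_def)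
    have "x \<bullet> c \<le> norm c'" using xc[OF x(2)] norm_cauchy_schwarz[of x c'] x by simp
    moreover have "\<bar>x \<bullet> c\<bar> \<le> 1" using Cauchy_Schwarz_ineq2[of x c] x c by simp
    ultimately show ?thesis using nc'1 by (intro arccos_le_arccos) auto
  qed
  obtain x0 where x0: "x0 \<in> coord_greatsphere i" "x0 \<bullet> c = norm c'"
  proof (cases "c' = 0")
    case True
    obtain j :: 'n where j: "j \<noteq> i" using exists_other[OF d] by blast
    have "axis j 1 \<bullet> c = c' $ j" using j by (simp add: c'_def inner_axis inner_axis' inner_commute)
    moreover have "axis j (1::real) \<in> coord_greatsphere i"
      using j by (simp add: coord_greatsphere_def, simp add: axis_def)
    ultimately show ?thesis using that True by auto
  next
    case False
    define x where "x = (1 / norm c') *\<^sub>R c'"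
    have "norm x = 1" using False by (simp add: x_def)
    moreover have "x $ i = 0" by (simp add: x_def c'_def)
    ultimately have "x \<in> coord_greatsphere i" by (simp add: coord_greatsphere_def)
    moreover have "x \<bullet> c = norm c'"
      using False c'c by (simp add: x_def power2_norm_eq_inner[symmetric] power2_eq_square)
    ultimately show ?thesis using that by blast
  qed
  have "dist_to_greatsphere c i = arccos (norm c')"
    unfolding dist_to_greatsphere_def sph_dist_def
  proof (rule cInf_eq_minimum)
    show "arccos (norm c') \<in> (\<lambda>x. arccos (x \<bullet> c)) ` coord_greatsphere i"
      using x0 by (metis image_eqI)
  next
    fix y assume "y \<in> (\<lambda>x. arccos (x \<bullet> c)) ` coord_greatsphere i"
    then show "arccos (norm c') \<le> y" using lower by auto
  qed
  then show ?thesis using nc' by simp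
qed



lemma tcap:
  fixes C :: "(real^'n) set"
  assumes kt: "k_tangent_cap k C" and d: "CARD('n) \<ge> 2" and kd: "k \<le> CARD('n)"
  obtains c r A where "C = sph_cap c r" "norm c = 1" "0 < r" "r < pi/2" "card A = k"
    "\<And>i. \<bar>c$i\<bar> = (if i \<in> A then sin r else 0)" "real k * (sin r)^2 = 1"
proof -
  obtain c r S where c: "c \<in> sphere 0 1" "0 < r" "r < pi / 2" "C = sph_cap c r"
    "card S = CARD('n) - k" "\<forall>i\<in>S. c $ i = 0" "\<forall>i. i \<notin> S \<longrightarrow> tangent_cap_to c r i"
    using kt unfolding k_tangent_cap_def by blast
  have nc: "norm c = 1" using c(1) by simp
  define A where "A = - S"
  have cA: "card A = k" unfolding A_def using c(5) kd
    by (simp add: Compl_eq_Diff_UNIV card_Diff_subset)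
  have sr: "0 < sin r" using c(2,3) by (intro sin_gt_zero) auto
  have comp: "\<bar>c$i\<bar> = (if i \<in> A then sin r else 0)" for i
  proof (cases "i \<in> S")
    case True then show ?thesis using c(6) by (simp add: A_def)
  next
    case False
    have "r = arccos (sqrt (1 - (c$i)^2))"
      using c(7) False dist_gs[OF nc d] by (simp add: tangent_cap_to_def)
    have ci: "\<bar>c$i\<bar> \<le> 1" using component_le_norm_cart[of c i] nc by simp
    then have ci2: "(c$i)^2 \<le> 1" by (simp add: abs_square_le_1)
    have "cos r = sqrt (1 - (c$i)^2)"
    proof -
      have "0 \<le> sqrt (1 - (c$i)^2)" "sqrt (1 - (c$i)^2) \<le> 1" using ci2 by auto
      then have "cos (arccos (sqrt (1 - (c$i)^2))) = sqrt (1 - (c$i)^2)"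
        by (intro cos_arccos) linarith+
      then show ?thesis using \<open>r = _\<close> by simp
    qed
    then have "(cos r)^2 = 1 - (c$i)^2" using ci2 by simp
    then have "(c$i)^2 = (sin r)^2" using sin_cos_squared_add[of r] by linarith
    then have "\<bar>c$i\<bar> = \<bar>sin r\<bar>" by (metis real_sqrt_abs)
    then show ?thesis using sr False by (simp add: A_def)
  qed
  have "1 = c \<bullet> c" using nc by (simp add: norm_eq_1)
  also have "\<dots> = (\<Sum>i\<in>UNIV. \<bar>c$i\<bar>^2)" by (simp add: inner_vec_def power2_eq_square)
  also have "\<dots> = (\<Sum>i\<in>UNIV. if i \<in> A then (sin r)^2 else 0)"
    by (intro sum.cong) (auto simp: comp)
  also have "\<dots> = real k * (sin r)^2" using cA by (simp add: sum.If_cases)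
  finally have "real k * (sin r)^2 = 1" by simp
  then show ?thesis using that c nc cA comp by blast
qed



lemma interior_mem:
  fixes a x :: "real^'n"
  assumes a: "norm a = 1" and x: "norm x = 1" and xa: "x \<bullet> a > cos r" and r: "0 \<le> r" "r \<le> pi"
  shows "x \<in> sph_interior (sph_cap a r)"
proof -
  have mem: "y \<in> sph_cap a r" if y: "norm y = 1" "y \<bullet> a > cos r" for y :: "real^'n"
  proof -
    have "y \<bullet> a \<le> 1" using norm_cauchy_schwarz[of y a] y a by simp
    then have "arccos (y \<bullet> a) \<le> arccos (cos r)"
      using y(2) by (intro arccos_le_arccos) auto
    then show ?thesis using y r by (simp add: sph_cap_def sph_dist_def arccos_cos)
  qed
  define e where "e = x \<bullet> a - cos r"
  have e: "e > 0" using xa by (simp add: e_def)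
  have "ball x e \<inter> sphere 0 1 \<subseteq> sph_cap a r"
  proof
    fix y assume y: "y \<in> ball x e \<inter> sphere 0 1"
    have "\<bar>(x - y) \<bullet> a\<bar> \<le> norm (x - y)" using Cauchy_Schwarz_ineq2[of "x - y" a] a by simp
    moreover have "norm (x - y) < e" using y by (simp add: dist_norm)
    ultimately have "y \<bullet> a > cos r" by (simp add: e_def inner_diff_left)
    then show "y \<in> sph_cap a r" using mem y by simp
  qed
  then show ?thesis using mem[OF x xa] e unfolding sph_interior_def by blast
qed

lemma disjoint_bound:
  fixes a b :: "real^'n"
  assumes a: "norm a = 1" and b: "norm b = 1"
    and r1: "0 < r1" "r1 < pi/2" and r2: "0 < r2" "r2 < pi/2"
    and disj: "sph_interior (sph_cap a r1) \<inter> sph_interior (sph_cap b r2) = {}"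
  shows "a \<bullet> b \<le> cos (r1 + r2)"
proof (rule ccontr)
  assume "\<not> ?thesis"
  then have pc: "a \<bullet> b > cos (r1 + r2)" by simp
  define p where "p = a \<bullet> b"
  have aa: "a \<bullet> a = 1" and bb: "b \<bullet> b = 1" using a b by (simp_all add: norm_eq_1)
  have ba: "b \<bullet> a = p" by (simp add: p_def inner_commute)
  have p1: "\<bar>p\<bar> \<le> 1" using Cauchy_Schwarz_ineq2[of a b] a b by (simp add: p_def)
  define \<theta> where "\<theta> = arccos p"
  have th0: "0 \<le> \<theta>" "\<theta> \<le> pi" using p1 by (auto simp: \<theta>_def arccos_lbound arccos_ubound)
  have cth: "cos \<theta> = p" using p1 by (simp add: \<theta>_def cos_arccos)
  have "arccos p < arccos (cos (r1 + r2))"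
    using pc p1 by (intro arccos_less_arccos) (auto simp: p_def)
  then have thr: "\<theta> < r1 + r2" using r1 r2 by (simp add: \<theta>_def arccos_cos)
  obtain x :: "real^'n" where x: "norm x = 1" "x \<bullet> a > cos r1" "x \<bullet> b > cos r2"
  proof (cases "\<theta> = 0")
    case True
    then have "p = 1" using cth by simp
    moreover have "cos r1 < 1" "cos r2 < 1"
      using cos_monotone_0_pi[of 0 r1] cos_monotone_0_pi[of 0 r2] r1 r2 by auto
    ultimately show ?thesis using that[of a] a aa by (simp add: p_def)
  next
    case False
    then have th: "0 < \<theta>" "\<theta> < pi" using th0 thr r1 r2 by auto
    define s where "s = sin \<theta>"
    have s: "s > 0" using th by (simp add: s_def sin_gt_zero)
    have s2: "s^2 = 1 - p^2" using sin_cos_squared_add[of \<theta>] cth by (simp add: s_def)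
    define \<phi> where "\<phi> = \<theta> * r1 / (r1 + r2)"
    have ph: "0 \<le> \<phi>" "\<phi> < r1" "0 \<le> \<theta> - \<phi>" "\<theta> - \<phi> < r2"
    proof -
      have "\<theta> - \<phi> = \<theta> * r2 / (r1 + r2)" using r1 r2 by (simp add: \<phi>_def field_simps)
      moreover have "\<theta> * r1 < (r1 + r2) * r1" "\<theta> * r2 < (r1 + r2) * r2" using thr r1 r2 by auto
      ultimately show "0 \<le> \<phi>" "\<phi> < r1" "0 \<le> \<theta> - \<phi>" "\<theta> - \<phi> < r2"
        using th r1 r2 by (auto simp: \<phi>_def field_simps)
    qed
    define x where "x = cos \<phi> *\<^sub>R a + (sin \<phi> / s) *\<^sub>R (b - p *\<^sub>R a)"
    have xa: "x \<bullet> a = cos \<phi>"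
      by (simp add: x_def inner_add_left inner_diff_left aa ba)
    have "x \<bullet> b = cos \<phi> * p + (sin \<phi> / s) * (1 - p * p)"
      by (simp add: x_def inner_add_left inner_diff_left bb p_def)
    also have "\<dots> = cos \<phi> * cos \<theta> + sin \<phi> * sin \<theta>"
    proof -
      have "1 - p * p = s * s" using s2 by (simp add: power2_eq_square)
      then have "(sin \<phi> / s) * (1 - p * p) = sin \<phi> * s"
        using s by (simp only:) (simp add: field_simps power2_eq_square)
      then show ?thesis using cth by (simp add: s_def)
    qed
    also have "\<dots> = cos (\<theta> - \<phi>)" by (simp add: cos_diff mult.commute)
    finally have xb: "x \<bullet> b = cos (\<theta> - \<phi>)" .
    have "x \<bullet> x = (cos \<phi>)^2 + (sin \<phi> / s)^2 * (1 - p * p)"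
      by (simp add: x_def inner_add_left inner_add_right inner_diff_left inner_diff_right
          aa bb ba p_def[symmetric] algebra_simps power2_eq_square)
         (simp add: add_divide_distrib[symmetric])
    also have "\<dots> = (cos \<phi>)^2 + (sin \<phi>)^2"
    proof -
      have pss: "1 - p * p = s * s" using s2 by (simp add: power2_eq_square)
      show ?thesis using s by (simp only: pss) (simp add: power_divide power2_eq_square)
    qed
    also have "\<dots> = 1" by simp
    finally have "norm x = 1" by (simp add: norm_eq_1)
    moreover have "x \<bullet> a > cos r1" using xa ph r1 by (simp add: cos_monotone_0_pi)
    moreover have "x \<bullet> b > cos r2" using xb ph r2 by (simp add: cos_monotone_0_pi)
    ultimately show ?thesis using that by blast
  qed
  have "x \<in> sph_interior (sph_cap a r1)" using interior_mem[OF a x(1,2)] r1 by simp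
  moreover have "x \<in> sph_interior (sph_cap b r2)" using interior_mem[OF b x(1,3)] r2 by simp
  ultimately show False using disj by blast
qed



theorem lemma5:
  fixes C1 C2 :: "(real^'n) set" and k1 k2 :: nat
  assumes "CARD('n) \<ge> 2"
    and "2 \<le> k1" "k1 \<le> CARD('n)" "2 \<le> k2" "k2 \<le> CARD('n)"
    and "k_tangent_cap k1 C1" "k_tangent_cap k2 C2"
    and "cap_orbit C1 \<noteq> cap_orbit C2"
    and "is_packing (cap_orbit C1 \<union> cap_orbit C2)"
  shows "real k1 + real k2 - real CARD('n) \<le> sqrt ((real k1 - 1) * (real k2 - 1)) - 1"
proof -
  obtain c1 r1 A1 where h1: "C1 = sph_cap c1 r1" "norm c1 = 1" "0 < r1" "r1 < pi/2" "card A1 = k1"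
    "\<And>i. \<bar>c1$i\<bar> = (if i \<in> A1 then sin r1 else 0)" "real k1 * (sin r1)^2 = 1"
    using tcap[OF assms(6,1,3)] by blast
  obtain c2 r2 A2 where h2: "C2 = sph_cap c2 r2" "norm c2 = 1" "0 < r2" "r2 < pi/2" "card A2 = k2"
    "\<And>i. \<bar>c2$i\<bar> = (if i \<in> A2 then sin r2 else 0)" "real k2 * (sin r2)^2 = 1"
    using tcap[OF assms(7,1,5)] by blast
  define T where "T = {i. c1$i * c2$i < 0}"
  define a where "a = flip T c1"
  have C1': "flip T ` C1 = sph_cap a r1" using h1(1) by (simp add: a_def flip_cap)
  have in1: "flip T ` C1 \<in> cap_orbit C1" using flip_in_group by (auto simp: cap_orbit_def)
  have in2: "C2 \<in> cap_orbit C2" unfolding cap_orbit_def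
  proof -
    have "C2 = id ` C2" by simp
    then show "C2 \<in> {g ` C2 |g. g \<in> refl_group}" using refl_group.refl_group_id by blast
  qed
  have ne: "flip T ` C1 \<noteq> C2"
  proof
    assume "flip T ` C1 = C2"
    then have "cap_orbit C1 = cap_orbit C2" by (intro orbit_eq) (rule sym)
    then show False using assms(8) by simp
  qed
  have "sph_interior (flip T ` C1) \<inter> sph_interior C2 = {}"
    using assms(9) in1 in2 ne unfolding is_packing_def by (meson UnI1 UnI2)
  then have disj: "sph_interior (sph_cap a r1) \<inter> sph_interior (sph_cap c2 r2) = {}"
    by (simp only: C1' h2(1)[symmetric])
  have na: "norm a = 1" using h1(2) by (simp add: a_def)
  have bound: "a \<bullet> c2 \<le> cos (r1 + r2)"
    using disjoint_bound[OF na h2(2) h1(3,4) h2(3,4) disj] .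
  define m where "m = card (A1 \<inter> A2)"
  have "a \<bullet> c2 = (\<Sum>i\<in>UNIV. \<bar>c1$i\<bar> * \<bar>c2$i\<bar>)"
  proof -
    have "(flip T c1)$i * c2$i = \<bar>c1$i\<bar> * \<bar>c2$i\<bar>" for i
    proof (cases "c1$i * c2$i < 0")
      case True then show ?thesis
        by (simp add: flip_def T_def abs_mult[symmetric] abs_of_neg)
    next
      case False then show ?thesis
        by (simp add: flip_def T_def abs_mult[symmetric] abs_of_nonneg)
    qed
    then show ?thesis unfolding inner_vec_def a_def by simp
  qed
  also have "\<dots> = (\<Sum>i\<in>UNIV. if i \<in> A1 \<inter> A2 then sin r1 * sin r2 else 0)"
    by (intro sum.cong) (auto simp: h1(6) h2(6))
  also have "\<dots> = real m * (sin r1 * sin r2)"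
    by (simp add: sum.If_cases m_def Int_def)
  finally have ac: "a \<bullet> c2 = real m * (sin r1 * sin r2)" .
  have s1: "sin r1 > 0" using h1(3,4) by (intro sin_gt_zero) auto
  have s2: "sin r2 > 0" using h2(3,4) by (intro sin_gt_zero) auto
  have co1: "cos r1 > 0" using h1(3,4) by (intro cos_gt_zero) auto
  have co2: "cos r2 > 0" using h2(3,4) by (intro cos_gt_zero) auto
  have X: "(real m + 1) * (sin r1 * sin r2) \<le> cos r1 * cos r2"
    using bound ac by (simp add: cos_add algebra_simps)
  have "((real m + 1) * (sin r1 * sin r2))^2 \<le> (cos r1 * cos r2)^2"
    using X s1 s2 by (intro power_mono) auto
  then have "real k1 * real k2 * ((real m + 1) * (sin r1 * sin r2))^2
      \<le> real k1 * real k2 * (cos r1 * cos r2)^2"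
    by (intro mult_left_mono) auto
  moreover have "real k1 * real k2 * ((real m + 1) * (sin r1 * sin r2))^2 = (real m + 1)^2"
  proof -
    have "real k1 * real k2 * ((real m + 1) * (sin r1 * sin r2))^2
        = (real m + 1)^2 * (real k1 * (sin r1)^2) * (real k2 * (sin r2)^2)"
      by (simp add: power_mult_distrib)
    then show ?thesis using h1(7) h2(7) by simp
  qed
  moreover have "real k1 * real k2 * (cos r1 * cos r2)^2 = (real k1 - 1) * (real k2 - 1)"
  proof -
    have "real k1 * real k2 * (cos r1 * cos r2)^2
        = (real k1 - real k1 * (sin r1)^2) * (real k2 - real k2 * (sin r2)^2)"
      using sin_cos_squared_add[of r1] sin_cos_squared_add[of r2]
      by (simp add: power_mult_distrib cos_squared_eq algebra_simps)
    then show ?thesis using h1(7) h2(7) by simp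
  qed
  ultimately have "(real m + 1)^2 \<le> (real k1 - 1) * (real k2 - 1)" by simp
  then have m1: "real m + 1 \<le> sqrt ((real k1 - 1) * (real k2 - 1))"
    by (rule real_le_rsqrt)
  have "card A1 + card A2 = card (A1 \<union> A2) + card (A1 \<inter> A2)"
    by (rule card_Un_Int) auto
  moreover have "card (A1 \<union> A2) \<le> CARD('n)" by (rule card_mono) auto
  ultimately have "k1 + k2 \<le> CARD('n) + m" using h1(5) h2(5) m_def by linarith
  then have "real k1 + real k2 \<le> real CARD('n) + real m" by linarith
  then show ?thesis using m1 by linarith
qed

end
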